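(* Assume $r(\boldsymbol\gamma)\le2+\alpha\le R(\boldsymbol\gamma)$ and let $(\mathbf A^{\rm d},\mathbf q^{\rm d})$ be an equilibrium with $\mathbf A^{\rm d}\mathbf q^{\rm d}=\boldsymbol\beta$, $\mathbf q^{\rm d}=\boldsymbol\gamma/(2+\alpha)$. Let $\boldsymbol\sigma\in\{-1,1\}^n$ and let $(\mathbf A^{\boldsymbol\sigma},\mathbf q^{\boldsymbol\sigma})$ be an equilibrium with $\mathbf a_i^{\boldsymbol\sigma}=\sigma_i\boldsymbol\beta$ for all $i$ (so $\mathbf q^{\boldsymbol\sigma}=\frac{\boldsymbol\gamma}{2+\alpha}-\frac{\alpha(\boldsymbol\sigma^\top\boldsymbol\gamma-(2+\alpha))}{(2+\alpha)(2+(n+1)\alpha)}\boldsymbol\sigma$). Then $\Omega(\mathbf A^{\rm d},\mathbf q^{\rm d})>\Omega(\mathbf A^{\boldsymbol\sigma},\mathbf q^{\boldsymbol\sigma})$ whenever $$\boldsymbol\sigma^\top\boldsymbol\gamma>2+\alpha\qquad\text{or}\qquad \boldsymbol\sigma^\top\boldsymbol\gamma<\frac{n\alpha(2+\alpha)}{2(1+\alpha)(2+(n+1)\alpha)+n\alpha}.$$ In particular: (i) for $\boldsymbol\sigma=\mathbf 1$ (all $\mathbf a_i=\boldsymbol\beta$), $\Omega(\mathbf A^{\rm d},\mathbf q^{\rm d})\ge\Omega(\mathbf A^{\mathbf 1},\mathbf q^{\mathbf 1})$, with strict inequality unless $R(\boldsymbol\gamma)=2+\alpha$; (ii) $\Omega(\mathbf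 A^{\rm d},\mathbf q^{\rm d})>\Omega(\mathbf A^{\boldsymbol\sigma},\mathbf q^{\boldsymbol\sigma})$ whenever $\boldsymbol\sigma^\top\boldsymbol\gamma\le0$.
   Context: Model: integers $n\ge2$, $m\ge2$; $\alpha>0$, $\boldsymbol\beta\in\mathbb R^m$ with $\|\boldsymbol\beta\|_2=1$, $\boldsymbol\gamma\in\mathbb R^n$ with all $\gamma_i>0$. With $\mathbf x=\mathbf A\mathbf q$, total surplus $\Omega(\mathbf A,\mathbf q)=\alpha(\mathbf x^\top\boldsymbol\beta-\tfrac12\mathbf x^\top\mathbf x)+\mathbf q^\top\boldsymbol\gamma-\tfrac12\mathbf q^\top\mathbf q$. Oligopoly: firm $i$ chooses a unit vector $\mathbf a_i\in\mathbb R^m$ and $q_i\ge0$ to maximize $\Pi_i=\alpha q_i\mathbf a_i^\top(\boldsymbol\beta-\sum_{j\ne i}q_j\mathbf a_j)-(1+\alpha)q_i^2+\gamma_iq_i$ given others; $\mathbf A=[\mathbf a_1,\dots,\mathbf a_n]$; an equilibrium is a profile of mutual best responses. $R(\mathbf v)=\|\mathbf v\|_1$, $r(\mathbf v)=2\|\mathbf v\|_\infty-\|\mathbf v\|_1$. *)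

theory Defs
  imports "HOL-Analysis.Analysis"
begin

text \<open>Firms are indexed by the finite type 'n (n = CARD('n)), goods coordinates by 'm.
  A strategy profile is a pair (a, q): a i is the unit vector of firm i (column i of A),
  q is the quantity vector.\<close>

definition xvec :: "('n::finite \<Rightarrow> real^'m) \<Rightarrow> real^'n \<Rightarrow> real^'m" where
  "xvec a q = (\<Sum>i\<in>UNIV. q$i *\<^sub>R a i)"

definition Omega :: "real \<Rightarrow> real^'m \<Rightarrow> real^'n \<Rightarrow> ('n::finite \<Rightarrow> real^'m) \<Rightarrow> real^'n \<Rightarrow> real" where
  "Omega \<alpha> \<beta> \<gamma> a q =
     \<alpha> * (xvec a q \<bullet> \<beta> - (1/2) * (xvec a q \<bullet> xvec a q)) + q \<bullet> \<gamma> - (1/2) * (q \<bullet> q)"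

definition profit :: "real \<Rightarrow> real^'m \<Rightarrow> real^'n \<Rightarrow> ('n::finite \<Rightarrow> real^'m) \<Rightarrow> real^'n
                      \<Rightarrow> 'n \<Rightarrow> real^'m \<Rightarrow> real \<Rightarrow> real" where
  "profit \<alpha> \<beta> \<gamma> a q i ai qi =
     \<alpha> * qi * (ai \<bullet> (\<beta> - (\<Sum>j\<in>UNIV - {i}. q$j *\<^sub>R a j))) - (1 + \<alpha>) * qi\<^sup>2 + \<gamma>$i * qi"

definition is_equilibrium :: "real \<Rightarrow> real^'m \<Rightarrow> real^'n \<Rightarrow> ('n::finite \<Rightarrow> real^'m) \<Rightarrow> real^'n \<Rightarrow> bool" where
  "is_equilibrium \<alpha> \<beta> \<gamma> a q \<longleftrightarrow>
     (\<forall>i. norm (a i) = 1 \<and> q$i \<ge> 0 \<and>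
        (\<forall>ai qi. norm ai = 1 \<and> qi \<ge> 0 \<longrightarrow>
           profit \<alpha> \<beta> \<gamma> a q i ai qi \<le> profit \<alpha> \<beta> \<gamma> a q i (a i) (q$i)))"

definition Rnorm :: "real^'n::finite \<Rightarrow> real" where
  "Rnorm v = (\<Sum>i\<in>UNIV. \<bar>v$i\<bar>)"

definition rnorm :: "real^'n::finite \<Rightarrow> real" where
  "rnorm v = 2 * Max (range (\<lambda>i. \<bar>v$i\<bar>)) - Rnorm v"

end

theory Submission
  imports Defs
begin

lemma diff_formula:
  fixes a p n t G d :: real
  assumes a: "a > 0"
  and d: "d = 2 + a"
  shows "(a/2 + G/d - G/(2*d^2)) -
         (a*((1-t) - (1-t)^2/2) + (G + a*t*p)/d - (G + 2*a*t*p + a^2*t^2*n)/(2*d^2))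
         = (a*t/(2*d^2)) * (t*(d^2 + a*n) - 2*p*(1+a))"
proof -
  have dz: "d \<noteq> 0" using a d by simp
  have a': "a = d - 2" using d by simp
  show ?thesis unfolding a' using dz by (simp add: field_simps power2_eq_square)
qed

lemma sign_core:
  fixes a p n t :: real
  assumes a: "a > 0" and n: "n > 0"
  and teq: "t * (2 + (n+1)*a) = (2+a) - p"
  shows "(p > 2 + a \<longrightarrow> t * (t*((2+a)^2 + a*n) - 2*p*(1+a)) > 0)
       \<and> (p < n*a*(2+a) / (2*(1+a)*(2+(n+1)*a) + n*a) \<longrightarrow> t * (t*((2+a)^2 + a*n) - 2*p*(1+a)) > 0)
       \<and> (p = 2 + a \<longrightarrow> t = 0)
       \<and> (p \<le> 0 \<longrightarrow> p < n*a*(2+a) / (2*(1+a)*(2+(n+1)*a) + n*a))"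
proof -
  define N where "N = 2 + (n+1)*a"
  have N: "N > 0" using a n unfolding N_def by (simp add: add_pos_nonneg)
  have tN: "t = ((2+a) - p)/N" using teq N unfolding N_def by (simp add: field_simps)
  have c1: "p > 2 + a \<longrightarrow> t * (t*((2+a)^2 + a*n) - 2*p*(1+a)) > 0"
  proof
    assume p: "p > 2 + a"
    have t: "t < 0" using tN N p by (simp add: divide_neg_pos)
    have "t*((2+a)^2 + a*n) \<le> 0" using t a n by (simp add: mult_nonpos_nonneg)
    moreover have "2*p*(1+a) > 0" using p a by simp
    ultimately have "t*((2+a)^2 + a*n) - 2*p*(1+a) < 0" by linarith
    then show "t * (t*((2+a)^2 + a*n) - 2*p*(1+a)) > 0" using t by (simp add: mult_neg_neg)
  qed
  have den: "2*(1+a)*N + n*a > 0" using N a n by (simp add: add_pos_nonneg)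
  have thrpos: "n*a*(2+a) / (2*(1+a)*N + n*a) \<ge> 0" using den a n by simp
  have thrd: "n*a*(2+a) / (2*(1+a)*N + n*a) < 2 + a"
    using den a n N by (simp add: field_simps) (smt (verit) mult_pos_pos N a)
  have c2: "p < n*a*(2+a) / (2*(1+a)*N + n*a) \<longrightarrow> t * (t*((2+a)^2 + a*n) - 2*p*(1+a)) > 0"
  proof
    assume p: "p < n*a*(2+a) / (2*(1+a)*N + n*a)"
    hence p2: "p * (2*(1+a)*N + n*a) < n*a*(2+a)" using den by (simp add: field_simps)
    have pd: "p < 2 + a" using p thrd by linarith
    have t: "t > 0" using tN N pd by simp
    have key: "p*((2+a)^2 + a*n + 2*(1+a)*N) < (2+a)*((2+a)^2 + a*n)"
    proof (cases "p \<le> 0")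
      case True
      have "p*((2+a)^2 + a*n + 2*(1+a)*N) \<le> 0" using True a n N
        by (intro mult_nonpos_nonneg) (auto intro!: add_nonneg_nonneg)
      moreover have "(2+a)*((2+a)^2 + a*n) > 0" using a n by (simp add: add_pos_nonneg)
      ultimately show ?thesis by linarith
    next
      case False
      have "p*(2+a)^2 < (2+a)*(2+a)^2" using False pd a by simp
      moreover have "p*(a*n + 2*(1+a)*N) < (2+a)*(a*n)" using p2 by (simp add: algebra_simps)
      ultimately show ?thesis by (simp add: algebra_simps)
    qed
    have Nt: "N*t = (2+a) - p" using tN N by simp
    have "(t*((2+a)^2 + a*n) - 2*p*(1+a))*N = (N*t)*((2+a)^2 + a*n) - 2*p*(1+a)*N"
      by (simp add: algebra_simps)
    also have "\<dots> = ((2+a)*((2+a)^2 + a*n)) - p*((2+a)^2 + a*n + 2*(1+a)*N)"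
      unfolding Nt by (simp add: algebra_simps)
    finally have "t*((2+a)^2 + a*n) - 2*p*(1+a) = (((2+a)*((2+a)^2 + a*n)) - p*((2+a)^2 + a*n + 2*(1+a)*N))/N"
      using N by (simp add: field_simps)
    also have "\<dots> > 0" using key N by simp
    finally show "t * (t*((2+a)^2 + a*n) - 2*p*(1+a)) > 0" using t by simp
  qed
  have c3: "p = 2 + a \<longrightarrow> t = 0" using tN by simp
  have c4: "p \<le> 0 \<longrightarrow> p < n*a*(2+a) / (2*(1+a)*N + n*a)"
  proof
    assume "p \<le> 0"
    moreover have "n*a*(2+a) / (2*(1+a)*N + n*a) > 0" using den a n by simp
    ultimately show "p < n*a*(2+a) / (2*(1+a)*N + n*a)" by linarith
  qed
  show ?thesis using c1 c2 c3 c4 unfolding N_def by blast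
qed
theorem theorem4:
  fixes \<alpha> :: real and \<beta> :: "real^'m::finite" and \<gamma> :: "real^'n::finite"
    and ad :: "'n \<Rightarrow> real^'m" and qd :: "real^'n"
    and as :: "'n \<Rightarrow> real^'m" and qs :: "real^'n"
    and \<sigma> :: "real^'n"
  assumes n2: "CARD('n) \<ge> 2" and m2: "CARD('m) \<ge> 2"
    and alpha: "\<alpha> > 0" and beta: "norm \<beta> = 1" and gamma: "\<forall>i. \<gamma>$i > 0"
    and lower: "rnorm \<gamma> \<le> 2 + \<alpha>" and upper: "2 + \<alpha> \<le> Rnorm \<gamma>"
    and eqd: "is_equilibrium \<alpha> \<beta> \<gamma> ad qd"
    and xd: "xvec ad qd = \<beta>"
    and qd: "qd = (1 / (2 + \<alpha>)) *\<^sub>R \<gamma>"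
    and sigma: "\<forall>i. \<sigma>$i = -1 \<or> \<sigma>$i = 1"
    and eqs: "is_equilibrium \<alpha> \<beta> \<gamma> as qs"
    and as: "\<forall>i. as i = \<sigma>$i *\<^sub>R \<beta>"
  shows "((\<sigma> \<bullet> \<gamma> > 2 + \<alpha> \<or>
           \<sigma> \<bullet> \<gamma> < real CARD('n) * \<alpha> * (2 + \<alpha>) /
                   (2 * (1 + \<alpha>) * (2 + (real CARD('n) + 1) * \<alpha>) + real CARD('n) * \<alpha>))
          \<longrightarrow> Omega \<alpha> \<beta> \<gamma> ad qd > Omega \<alpha> \<beta> \<gamma> as qs)
       \<and> ((\<forall>i. \<sigma>$i = 1) \<longrightarrow>
           Omega \<alpha> \<beta> \<gamma> ad qd \<ge> Omega \<alpha> \<beta> \<gamma> as qs \<and>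
           (Rnorm \<gamma> \<noteq> 2 + \<alpha> \<longrightarrow> Omega \<alpha> \<beta> \<gamma> ad qd > Omega \<alpha> \<beta> \<gamma> as qs))
       \<and> (\<sigma> \<bullet> \<gamma> \<le> 0 \<longrightarrow> Omega \<alpha> \<beta> \<gamma> ad qd > Omega \<alpha> \<beta> \<gamma> as qs)"
  proof -
  let ?n = "real CARD('n)"
  define S where "S = \<sigma> \<bullet> qs"
  define p where "p = \<sigma> \<bullet> \<gamma>"
  define G where "G = \<gamma> \<bullet> \<gamma>"
  define d where "d = 2 + \<alpha>"
  have bb: "\<beta> \<bullet> \<beta> = 1" using beta by (metis norm_eq_sqrt_inner real_sqrt_eq_1_iff)
  have sq: "\<sigma>$i * \<sigma>$i = 1" for i using sigma by (metis mult_1 mult_minus1 minus_minus)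
  have qsi: "(2+\<alpha>) * qs$i = \<gamma>$i + \<alpha>*\<sigma>$i*(1 - S)" for i
  proof -
    have E: "norm (as i) = 1 \<and> qs$i \<ge> 0 \<and>
        (\<forall>ai qi. norm ai = 1 \<and> qi \<ge> 0 \<longrightarrow>
           profit \<alpha> \<beta> \<gamma> as qs i ai qi \<le> profit \<alpha> \<beta> \<gamma> as qs i (as i) (qs$i))"
      using eqs unfolding is_equilibrium_def by blast
    define Sm where "Sm = (\<Sum>j\<in>UNIV-{i}. qs$j * \<sigma>$j)"
    have w: "\<beta> - (\<Sum>j\<in>UNIV-{i}. qs$j *\<^sub>R as j) = (1 - Sm) *\<^sub>R \<beta>"
    proof -
      have "(\<Sum>j\<in>UNIV-{i}. qs$j *\<^sub>R as j) = (\<Sum>j\<in>UNIV-{i}. (qs$j * \<sigma>$j) *\<^sub>R \<beta>)"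
        using as by simp
      also have "\<dots> = Sm *\<^sub>R \<beta>" unfolding Sm_def by (simp add: scaleR_sum_left)
      finally show ?thesis by (simp add: algebra_simps)
    qed
    define A where "A = \<alpha>*\<sigma>$i*(1-Sm) + \<gamma>$i"
    have pf: "profit \<alpha> \<beta> \<gamma> as qs i (as i) x = A*x - (1+\<alpha>)*x^2" for x
      unfolding profit_def w A_def using as bb by (simp add: algebra_simps)
    define ai where "ai = (if 1 - Sm \<ge> 0 then \<beta> else -\<beta>)"
    have nai: "norm ai = 1" unfolding ai_def using beta by simp
    have aiw: "ai \<bullet> ((1 - Sm) *\<^sub>R \<beta>) = \<bar>1 - Sm\<bar>" unfolding ai_def using bb by auto
    define e where "e = \<gamma>$i / (2*(1+\<alpha>))"
    have e0: "e \<ge> 0" unfolding e_def using gamma alpha by (simp add: less_imp_le)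
    have "profit \<alpha> \<beta> \<gamma> as qs i ai e = \<alpha>*e*\<bar>1 - Sm\<bar> - (1+\<alpha>)*e^2 + \<gamma>$i*e"
      unfolding profit_def w aiw by simp
    also have "\<dots> \<ge> \<gamma>$i*e - (1+\<alpha>)*e^2" using alpha e0 by simp
    also have "\<gamma>$i*e - (1+\<alpha>)*e^2 = (\<gamma>$i)^2/(4*(1+\<alpha>))"
    proof -
      obtain c where c: "c = 1+\<alpha>" "c > 0" using alpha by simp
      obtain g where g: "g = \<gamma>$i" by simp
      have h1: "\<gamma>$i*e = (\<gamma>$i)^2/(2*(1+\<alpha>))" and h2: "(1+\<alpha>)*e^2 = (\<gamma>$i)^2/(4*(1+\<alpha>))"
        unfolding e_def c(1)[symmetric] g[symmetric] using c(2) by (simp_all add: field_simps power2_eq_square)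
      have h3: "(\<gamma>$i)^2/(2*(1+\<alpha>)) - (\<gamma>$i)^2/(4*(1+\<alpha>)) = (\<gamma>$i)^2/(4*(1+\<alpha>))"
        unfolding c(1)[symmetric] g[symmetric] using c(2) by (simp add: field_simps)
      show ?thesis by (subst h1, subst h2, rule h3)
    qed
    finally have "profit \<alpha> \<beta> \<gamma> as qs i ai e \<ge> (\<gamma>$i)^2/(4*(1+\<alpha>))" .
    moreover have "(\<gamma>$i)^2/(4*(1+\<alpha>)) > 0" using gamma alpha
      by (metis add_pos_pos divide_pos_pos less_numeral_extra(1) mult_pos_pos zero_less_numeral zero_less_power)
    ultimately have fpos: "A*qs$i - (1+\<alpha>)*(qs$i)^2 > 0" using E nai e0 pf by fastforce
    have q0: "qs$i \<ge> 0" using E by blast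
    have Apos: "A > 0"
    proof (rule ccontr)
      assume "\<not> A > 0"
      then have "A*qs$i \<le> 0" using q0 by (simp add: mult_nonpos_nonneg)
      moreover have "(1+\<alpha>)*(qs$i)^2 \<ge> 0" using alpha by simp
      ultimately show False using fpos by linarith
    qed
    define x where "x = A/(2*(1+\<alpha>))"
    have x0: "x \<ge> 0" unfolding x_def using Apos alpha by simp
    have "A*x - (1+\<alpha>)*x^2 \<le> A*qs$i - (1+\<alpha>)*(qs$i)^2" using E nai x0 pf
      by (metis (no_types, lifting) E)
    moreover have "A = 2*(1+\<alpha>)*x" unfolding x_def using alpha by simp
    ultimately have "(1+\<alpha>)*(qs$i - x)^2 \<le> 0"
      by (simp add: algebra_simps power2_eq_square)
    then have "(qs$i - x)^2 \<le> 0" using alpha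
      by (smt (verit) mult_pos_pos zero_less_power2)
    then have "qs$i = x" by simp
    then have q: "2*(1+\<alpha>)*qs$i = A" unfolding x_def using alpha by simp
    have SS: "S = Sm + \<sigma>$i * qs$i"
    proof -
      have "S = (\<Sum>j\<in>UNIV. qs$j * \<sigma>$j)" unfolding S_def inner_vec_def by (simp add: mult.commute)
      also have "\<dots> = qs$i * \<sigma>$i + Sm" unfolding Sm_def
        by (simp add: sum.remove[of UNIV i])
      finally show ?thesis by simp
    qed
    have "2*(1+\<alpha>)*qs$i = \<alpha>*\<sigma>$i*(1-S) + \<alpha>*(\<sigma>$i*\<sigma>$i)*qs$i + \<gamma>$i"
      using q unfolding A_def SS by (simp add: algebra_simps)
    then show ?thesis using sq[of i] by (simp add: algebra_simps)
  qed
  have ss: "\<sigma> \<bullet> \<sigma> = ?n" unfolding inner_vec_def using sq by simp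
  have qsv: "qs = (1/d) *\<^sub>R (\<gamma> + (\<alpha>*(1-S)) *\<^sub>R \<sigma>)"
  proof -
    have "qs$i = (1/d) * (\<gamma>$i + \<alpha>*(1-S)*\<sigma>$i)" for i
      using qsi[of i] alpha unfolding d_def by (simp add: field_simps)
    then show ?thesis by (simp add: vec_eq_iff)
  qed
  have Seq: "d * S = p + \<alpha>*?n*(1-S)"
  proof -
    have "d * S = \<sigma> \<bullet> (d *\<^sub>R qs)" unfolding S_def by simp
    also have "d *\<^sub>R qs = \<gamma> + (\<alpha>*(1-S)) *\<^sub>R \<sigma>" unfolding qsv d_def using alpha by simp
    finally show ?thesis unfolding p_def using ss by (simp add: inner_add_right algebra_simps)
  qed
  define t where "t = 1 - S"
  have teq: "t * (2 + (?n+1)*\<alpha>) = (2+\<alpha>) - p" using Seq unfolding t_def d_def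
    by (simp add: algebra_simps)
  have xs: "xvec as qs = S *\<^sub>R \<beta>"
  proof -
    have "xvec as qs = (\<Sum>i\<in>UNIV. (qs$i * \<sigma>$i) *\<^sub>R \<beta>)" unfolding xvec_def using as by simp
    also have "\<dots> = S *\<^sub>R \<beta>" unfolding S_def inner_vec_def
      by (simp add: scaleR_sum_left mult.commute)
    finally show ?thesis .
  qed
  have dpos: "d > 0" unfolding d_def using alpha by simp
  have Os: "Omega \<alpha> \<beta> \<gamma> as qs =
      \<alpha>*((1-t) - (1-t)^2/2) + (G + \<alpha>*t*p)/d - (G + 2*\<alpha>*t*p + \<alpha>^2*t^2*?n)/(2*d^2)"
  proof -
    have g: "qs \<bullet> \<gamma> = (G + \<alpha>*t*p)/d" unfolding qsv G_def p_def t_def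
      by (simp add: inner_add_left inner_add_right inner_commute[of \<gamma> \<sigma>])
    have vv: "(\<gamma> + (\<alpha>*(1-S)) *\<^sub>R \<sigma>) \<bullet> (\<gamma> + (\<alpha>*(1-S)) *\<^sub>R \<sigma>) = G + 2*\<alpha>*t*p + \<alpha>^2*t^2*?n"
      using ss unfolding G_def p_def t_def
      by (simp add: inner_add_left inner_add_right inner_commute[of \<gamma> \<sigma>] power2_eq_square algebra_simps)
    have q: "qs \<bullet> qs = (G + 2*\<alpha>*t*p + \<alpha>^2*t^2*?n)/d^2" unfolding qsv
      by (simp only: inner_scaleR_left inner_scaleR_right vv) (simp add: power2_eq_square)
    show ?thesis unfolding Omega_def xs g q using bb by (simp add: t_def power2_eq_square)
  qed
  have Od: "Omega \<alpha> \<beta> \<gamma> ad qd = \<alpha>/2 + G/d - G/(2*d^2)"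
  proof -
    have g: "qd \<bullet> \<gamma> = G/d" unfolding qd G_def d_def by simp
    have q: "qd \<bullet> qd = G/d^2" unfolding qd G_def d_def by (simp add: power2_eq_square)
    show ?thesis unfolding Omega_def xd bb g q by simp
  qed
  have D0: "Omega \<alpha> \<beta> \<gamma> ad qd - Omega \<alpha> \<beta> \<gamma> as qs
      = (\<alpha>*t/(2*d^2)) * (t*(d^2 + \<alpha>*?n) - 2*p*(1+\<alpha>))"
    unfolding Od Os by (rule diff_formula[OF alpha d_def])
  have D: "Omega \<alpha> \<beta> \<gamma> ad qd - Omega \<alpha> \<beta> \<gamma> as qs
      = (\<alpha>/(2*d^2)) * (t * (t*((2+\<alpha>)^2 + \<alpha>*?n) - 2*p*(1+\<alpha>)))"
    unfolding D0 by (simp add: d_def)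
  have cf: "\<alpha>/(2*d^2) > 0" using alpha dpos by simp
  have npos: "?n > 0" using n2 by simp
  note SC = sign_core[OF alpha npos teq]
  have pos: "t * (t*((2+\<alpha>)^2 + \<alpha>*?n) - 2*p*(1+\<alpha>)) > 0 \<Longrightarrow>
      Omega \<alpha> \<beta> \<gamma> ad qd > Omega \<alpha> \<beta> \<gamma> as qs"
    using D cf by (smt (verit) mult_pos_pos)
  have part1: "(p > 2 + \<alpha> \<or>
           p < ?n * \<alpha> * (2 + \<alpha>) /
                   (2 * (1 + \<alpha>) * (2 + (?n + 1) * \<alpha>) + ?n * \<alpha>))
          \<longrightarrow> Omega \<alpha> \<beta> \<gamma> ad qd > Omega \<alpha> \<beta> \<gamma> as qs"
    using SC pos by (auto simp: mult.assoc)
  have part2: "(\<forall>i. \<sigma>$i = 1) \<longrightarrow>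
           Omega \<alpha> \<beta> \<gamma> ad qd \<ge> Omega \<alpha> \<beta> \<gamma> as qs \<and>
           (Rnorm \<gamma> \<noteq> 2 + \<alpha> \<longrightarrow> Omega \<alpha> \<beta> \<gamma> ad qd > Omega \<alpha> \<beta> \<gamma> as qs)"
  proof
    assume s1: "\<forall>i. \<sigma>$i = 1"
    have "p = Rnorm \<gamma>" unfolding p_def Rnorm_def inner_vec_def using s1 gamma
      by (simp add: less_imp_le)
    then have pR: "p \<ge> 2 + \<alpha>" using upper by simp
    show "Omega \<alpha> \<beta> \<gamma> ad qd \<ge> Omega \<alpha> \<beta> \<gamma> as qs \<and>
           (Rnorm \<gamma> \<noteq> 2 + \<alpha> \<longrightarrow> Omega \<alpha> \<beta> \<gamma> ad qd > Omega \<alpha> \<beta> \<gamma> as qs)"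
    proof (cases "p = 2 + \<alpha>")
      case True
      then have "t = 0" using SC by blast
      then show ?thesis using D True \<open>p = Rnorm \<gamma>\<close> by simp
    next
      case False
      then have "p > 2 + \<alpha>" using pR by simp
      then show ?thesis using part1 by simp
    qed
  qed
  have part3: "p \<le> 0 \<longrightarrow> Omega \<alpha> \<beta> \<gamma> ad qd > Omega \<alpha> \<beta> \<gamma> as qs"
    using SC part1 by blast
  show ?thesis using part1 part2 part3 unfolding p_def by blast
qed

end
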